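(* Consider the SWLME system $\partial_t U+\partial_x F(U)+B(U)\partial_x U=0$ in the conservative variables $U=(h,q,m_1,\dots,m_N)$ with $q=hu_m$, $m_i=h\alpha_i$, on the state space $h>0$, where $$F(U)=\Big(q,\ \frac{q^2}{h}+\frac g2h^2+\sum_{i=1}^N\frac{m_i^2}{(2i+1)h},\ \frac{2qm_1}{h},\dots,\frac{2qm_N}{h}\Big)^T,\quad B(U)=\mathrm{diag}(0,0,-u_m,\dots,-u_m),$$ and $g>0$. Let $A(U)=\frac{\partial F}{\partial U}(U)+B(U)$, with eigenvalues $\lambda_{1,2}=u_m\pm c$, $c=\sqrt{gh+\sum_{i=1}^N\frac{3\alpha_i^2}{2i+1}}$, and $\lambda_{i+2}=u_m$ ($i=1,\dots,N$). Then the characteristic fields associated with $\lambda_1$ and $\lambda_2$ are genuinely nonlinear, i.e. $\nabla_U\lambda_k(U)\cdot r_k(U)\neq 0$ for every $U$ with $h>0$ and every eigenvector $r_k$ of $A(U)$ for $\lambda_k$ ($k=1,2$), and the eigenvalue $u_m$ is linearly degenerate, i.e. $\nabla_U u_m\cdot r=0$ for every eigenvector $r$ of $A(U)$ associated with the eigenvalue $u_m$.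
   Context: SWLME = Shallow Water Linearized Moment Equations: $h$ water height, $u_m$ mean horizontal velocity, $\alpha_i$ coefficients of the vertical velocity profile expansion in Legendre-type basis functions, $g$ gravitational constant. Gradients are taken with respect to the conservative variables $(h,q,m_1,\dots,m_N)$, with $u_m=q/h$, $\alpha_i=m_i/h$. *)

theory Defs
  imports "HOL-Analysis.Analysis"
begin

text \<open>State vectors U = (h, q, m_1, ..., m_N) are represented as functions
  nat => real, using indices 0..N+1: U 0 = h, U 1 = q, U (i+1) = m_i (1 <= i <= N).
  Entries with index > N+1 are irrelevant.\<close>

definition swF :: "real \<Rightarrow> nat \<Rightarrow> (nat \<Rightarrow> real) \<Rightarrow> nat \<Rightarrow> real" where
  "swF g N U k =
     (if k = 0 then U 1
      else if k = 1 then (U 1)^2 / U 0 + g / 2 * (U 0)^2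
                         + (\<Sum>i=1..N. (U (i+1))^2 / ((2 * real i + 1) * U 0))
      else if k \<le> N + 1 then 2 * U 1 * U k / U 0
      else 0)"

definition swB :: "nat \<Rightarrow> (nat \<Rightarrow> real) \<Rightarrow> nat \<Rightarrow> nat \<Rightarrow> real" where
  "swB N U k j = (if k = j \<and> 2 \<le> k \<and> k \<le> N + 1 then - (U 1 / U 0) else 0)"

definition pderivU :: "((nat \<Rightarrow> real) \<Rightarrow> real) \<Rightarrow> (nat \<Rightarrow> real) \<Rightarrow> nat \<Rightarrow> real" where
  "pderivU f U j = deriv (\<lambda>t. f (U(j := t))) (U j)"

definition swA :: "real \<Rightarrow> nat \<Rightarrow> (nat \<Rightarrow> real) \<Rightarrow> nat \<Rightarrow> nat \<Rightarrow> real" where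
  "swA g N U k j = pderivU (\<lambda>V. swF g N V k) U j + swB N U k j"

definition um :: "(nat \<Rightarrow> real) \<Rightarrow> real" where
  "um U = U 1 / U 0"

definition swc :: "real \<Rightarrow> nat \<Rightarrow> (nat \<Rightarrow> real) \<Rightarrow> real" where
  "swc g N U = sqrt (g * U 0 + (\<Sum>i=1..N. 3 * (U (i+1) / U 0)^2 / (2 * real i + 1)))"

definition lam1 :: "real \<Rightarrow> nat \<Rightarrow> (nat \<Rightarrow> real) \<Rightarrow> real" where
  "lam1 g N U = um U - swc g N U"

definition lam2 :: "real \<Rightarrow> nat \<Rightarrow> (nat \<Rightarrow> real) \<Rightarrow> real" where
  "lam2 g N U = um U + swc g N U"

definition is_eigvec :: "real \<Rightarrow> nat \<Rightarrow> (nat \<Rightarrow> real) \<Rightarrow> real \<Rightarrow> (nat \<Rightarrow> real) \<Rightarrow> bool" where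
  "is_eigvec g N U lam r \<longleftrightarrow>
     (\<exists>j\<le>N+1. r j \<noteq> 0) \<and>
     (\<forall>k\<le>N+1. (\<Sum>j\<le>N+1. swA g N U k j * r j) = lam * r k)"

definition grad_dot :: "nat \<Rightarrow> ((nat \<Rightarrow> real) \<Rightarrow> real) \<Rightarrow> (nat \<Rightarrow> real) \<Rightarrow> (nat \<Rightarrow> real) \<Rightarrow> real" where
  "grad_dot N f U r = (\<Sum>j\<le>N+1. pderivU f U j * r j)"

end

theory Submission
  imports Defs
begin


lemma pd_intro: "((\<lambda>t. f (U(j:=t))) has_real_derivative D) (at (U j)) \<Longrightarrow> pderivU f U j = D"
  unfolding pderivU_def by (rule DERIV_imp_deriv)

definition EE :: "real \<Rightarrow> nat \<Rightarrow> (nat \<Rightarrow> real) \<Rightarrow> real" where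
  "EE g N V = g * V 0 + (\<Sum>i=1..N. 3 * (V (i+1) / V 0)^2 / (2 * real i + 1))"

lemma swc_EE: "swc g N V = sqrt (EE g N V)" unfolding swc_def EE_def by simp

lemma dE0:
  assumes "U 0 > 0"
  shows "((\<lambda>t. EE g N (U(0:=t))) has_real_derivative
     (g - (\<Sum>i=1..N. 6 * (U (i+1))^2 / ((U 0)^3 * (2 * real i + 1))))) (at (U 0))"
proof -
  have "((\<lambda>t. EE g N (U(0:=t))) has_real_derivative
     (g + (\<Sum>i=1..N. 3 * (2 * (U (i+1) / U 0) * (- U (i+1) / (U 0)^2)) / (2 * real i + 1)))) (at (U 0))"
  proof -
    have fe: "(\<lambda>t. EE g N (U(0:=t))) = (\<lambda>t. g * t + (\<Sum>i=1..N. 3 * (U (i+1) / t)^2 / (2 * real i + 1)))"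
      unfolding EE_def by simp
    have d1: "\<And>i. ((\<lambda>t. 3 * (U (i+1) / t)^2 / (2 * real i + 1)) has_real_derivative
          3 * (2 * (U (i+1) / U 0) * (- U (i+1) / (U 0)^2)) / (2 * real i + 1)) (at (U 0))"
      using assms by (auto intro!: derivative_eq_intros simp: power2_eq_square)
    have d2: "((\<lambda>t. (\<Sum>i=1..N. 3 * (U (i+1) / t)^2 / (2 * real i + 1))) has_real_derivative
       (\<Sum>i=1..N. 3 * (2 * (U (i+1) / U 0) * (- U (i+1) / (U 0)^2)) / (2 * real i + 1))) (at (U 0))"
      by (rule DERIV_sum) (rule d1)
    have d3: "((\<lambda>t. g * t) has_real_derivative g) (at (U 0))"
      by (auto intro!: derivative_eq_intros)
    show ?thesis unfolding fe by (rule DERIV_add[OF d3 d2])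
  qed
  moreover have "(\<Sum>i=1..N. 3 * (2 * (U (i+1) / U 0) * (- U (i+1) / (U 0)^2)) / (2 * real i + 1))
      = - (\<Sum>i=1..N. 6 * (U (i+1))^2 / ((U 0)^3 * (2 * real i + 1)))"
    unfolding sum_negf[symmetric]
  proof (rule sum.cong[OF refl])
    fix i assume "i \<in> {1..N}"
    have "(2 * real i + 1) > 0" by simp
    then show "3 * (2 * (U (i+1) / U 0) * (- U (i+1) / (U 0)^2)) / (2 * real i + 1)
        = - (6 * (U (i+1))^2 / ((U 0)^3 * (2 * real i + 1)))"
      using assms by (simp add: power2_eq_square power3_eq_cube field_simps)
  qed
  ultimately show ?thesis by simp
qed

lemma dEj:
  assumes "U 0 > 0" "2 \<le> j" "j \<le> N+1"
  shows "((\<lambda>t. EE g N (U(j:=t))) has_real_derivative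
     (6 * U j / ((U 0)^2 * (2 * real (j-1) + 1)))) (at (U j))"
proof -
  have j0: "j \<noteq> 0" using assms by simp
  have fe: "(\<lambda>t. EE g N (U(j:=t))) = (\<lambda>t. g * U 0 + (\<Sum>i=1..N. 3 * ((U(j:=t)) (i+1) / U 0)^2 / (2 * real i + 1)))"
    unfolding EE_def using j0 by simp
  have d1: "((\<lambda>t. 3 * ((U(j:=t)) (i+1) / U 0)^2 / (2 * real i + 1)) has_real_derivative
          (if i = j - 1 then 6 * U j / ((U 0)^2 * (2 * real (j-1) + 1)) else 0)) (at (U j))" for i
  proof (cases "i = j - 1")
    case True
    then have ij: "i + 1 = j" using assms by simp
    have D: "((\<lambda>t. 3 * (t / U 0)^2 / (2 * real i + 1)) has_real_derivative
          3 * (2 * (U j / U 0) * (1 / U 0)) / (2 * real i + 1)) (at (U j))"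
      using assms by (auto intro!: derivative_eq_intros simp: power2_eq_square)
    have eq: "3 * (2 * (U j / U 0) * (1 / U 0)) / (2 * real i + 1) = 6 * U j / ((U 0)^2 * (2 * real (j-1) + 1))"
      using True by (simp add: power2_eq_square)
    have fe2: "(\<lambda>t. 3 * ((U(j:=t)) (i+1) / U 0)^2 / (2 * real i + 1)) = (\<lambda>t. 3 * (t / U 0)^2 / (2 * real i + 1))"
      using ij by simp
    show ?thesis unfolding fe2 if_P[OF True] eq[symmetric] by (rule D)
  next
    case False
    then have ij: "i + 1 \<noteq> j" using assms by auto
    show ?thesis using ij False by simp
  qed
  have d2: "((\<lambda>t. (\<Sum>i=1..N. 3 * ((U(j:=t)) (i+1) / U 0)^2 / (2 * real i + 1))) has_real_derivative
       (\<Sum>i=1..N. (if i = j - 1 then 6 * U j / ((U 0)^2 * (2 * real (j-1) + 1)) else 0))) (at (U j))"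
    by (rule DERIV_sum) (rule d1)
  have "(\<Sum>i=1..N. (if i = j - 1 then 6 * U j / ((U 0)^2 * (2 * real (j-1) + 1)) else 0))
      = 6 * U j / ((U 0)^2 * (2 * real (j-1) + 1))"
  proof -
    have "j - 1 \<in> {1..N}" using assms by auto
    then show ?thesis by simp
  qed
  then have d2': "((\<lambda>t. (\<Sum>i=1..N. 3 * ((U(j:=t)) (i+1) / U 0)^2 / (2 * real i + 1))) has_real_derivative
       6 * U j / ((U 0)^2 * (2 * real (j-1) + 1))) (at (U j))" using d2 by simp
  have d3: "((\<lambda>t. g * U 0) has_real_derivative 0) (at (U j))"
    by (auto intro!: derivative_eq_intros)
  show ?thesis unfolding fe using DERIV_add[OF d3 d2'] by simp
qed

lemma dEo:
  assumes "j \<noteq> 0" "\<not> (2 \<le> j \<and> j \<le> N+1)"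
  shows "((\<lambda>t. EE g N (U(j:=t))) has_real_derivative 0) (at (U j))"
proof -
  have "(\<lambda>t. EE g N (U(j:=t))) = (\<lambda>t. EE g N U)"
    unfolding EE_def using assms by (intro ext) (auto intro!: sum.cong)
  then show ?thesis by simp
qed

definition dE :: "real \<Rightarrow> nat \<Rightarrow> (nat \<Rightarrow> real) \<Rightarrow> nat \<Rightarrow> real" where
  "dE g N U j = (if j = 0 then g - (\<Sum>i=1..N. 6 * (U (i+1))^2 / ((U 0)^3 * (2 * real i + 1)))
     else if 2 \<le> j \<and> j \<le> N+1 then 6 * U j / ((U 0)^2 * (2 * real (j-1) + 1)) else 0)"

lemma dE_all:
  assumes "U 0 > 0"
  shows "((\<lambda>t. EE g N (U(j:=t))) has_real_derivative dE g N U j) (at (U j))"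
  using dE0[of U g N, OF assms] dEj[of U _ N g, OF assms] dEo[of _ N g U] unfolding dE_def by auto

definition du :: "(nat \<Rightarrow> real) \<Rightarrow> nat \<Rightarrow> real" where
  "du U j = (if j = 0 then - U 1 / (U 0)^2 else if j = 1 then 1 / U 0 else 0)"

lemma du_all:
  assumes "U 0 > 0"
  shows "((\<lambda>t. um (U(j:=t))) has_real_derivative du U j) (at (U j))"
proof -
  consider "j = 0" | "j = 1" | "j \<noteq> 0" "j \<noteq> 1" by auto
  then show ?thesis
  proof cases
    case 1
    then show ?thesis unfolding um_def du_def using assms
      by (auto intro!: derivative_eq_intros simp: power2_eq_square)
  next
    case 2
    then show ?thesis unfolding um_def du_def using assms
      by (auto intro!: derivative_eq_intros)
  next
    case 3
    then show ?thesis unfolding um_def du_def using assms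
      by (auto intro!: derivative_eq_intros)
  qed
qed

lemma EE_pos: assumes "g > 0" "U 0 > 0" shows "EE g N U > 0"
proof -
  have "(\<Sum>i=1..N. 3 * (U (i+1) / U 0)^2 / (2 * real i + 1)) \<ge> 0"
    by (intro sum_nonneg) auto
  then show ?thesis unfolding EE_def using assms by (simp add: add_pos_nonneg)
qed

lemma pd_lam:
  assumes "g > 0" "U 0 > 0"
  shows "pderivU (\<lambda>V. um V + s * swc g N V) U j = du U j + s * (dE g N U j / (2 * sqrt (EE g N U)))"
proof (rule pd_intro)
  have e: "EE g N (U(j := U j)) = EE g N U" by simp
  have sq: "((\<lambda>t. sqrt (EE g N (U(j:=t)))) has_real_derivative
      inverse (sqrt (EE g N U)) / 2 * dE g N U j) (at (U j))"
  proof -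
    have s0: "(sqrt has_real_derivative inverse (sqrt (EE g N U)) / 2) (at (EE g N (U(j := U j))))"
      using DERIV_real_sqrt[OF EE_pos[of g U N, OF assms]] by simp
    show ?thesis using DERIV_chain2[OF s0 dE_all[of U g N j, OF assms(2)]] by simp
  qed
  have "((\<lambda>t. um (U(j:=t)) + s * sqrt (EE g N (U(j:=t)))) has_real_derivative
      du U j + s * (inverse (sqrt (EE g N U)) / 2 * dE g N U j)) (at (U j))"
    by (intro DERIV_add DERIV_cmult du_all[of U j, OF assms(2)] sq)
  then show "((\<lambda>t. um (U(j:=t)) + s * swc g N (U(j:=t))) has_real_derivative
      du U j + s * (dE g N U j / (2 * sqrt (EE g N U)))) (at (U j))"
    unfolding swc_EE by (simp add: field_simps)
qed

lemma pd_um: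
  assumes "U 0 > 0" shows "pderivU um U j = du U j"
  by (rule pd_intro) (rule du_all[of U j, OF assms])

lemma swA0: "swA g N U 0 j = (if j = 1 then 1 else 0)"
proof -
  have "pderivU (\<lambda>V. swF g N V 0) U j = (if j = 1 then 1 else 0)"
  proof (rule pd_intro)
    show "((\<lambda>t. swF g N (U(j:=t)) 0) has_real_derivative (if j = 1 then 1 else 0)) (at (U j))"
      unfolding swF_def by (cases "j = 1") (auto intro!: derivative_eq_intros)
  qed
  then show ?thesis unfolding swA_def swB_def by simp
qed

lemma swAk:
  assumes "U 0 > 0" "2 \<le> k" "k \<le> N+1"
  shows "swA g N U k j = (if j = 0 then - 2 * U 1 * U k / (U 0)^2 else if j = 1 then 2 * U k / U 0
           else if j = k then U 1 / U 0 else 0)"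
proof -
  have "pderivU (\<lambda>V. swF g N V k) U j = (if j = 0 then - 2 * U 1 * U k / (U 0)^2 else if j = 1 then 2 * U k / U 0
           else if j = k then 2 * U 1 / U 0 else 0)"
  proof (rule pd_intro)
    have fe: "(\<lambda>t. swF g N (U(j:=t)) k) = (\<lambda>t. 2 * (U(j:=t)) 1 * (U(j:=t)) k / (U(j:=t)) 0)"
      unfolding swF_def using assms by (intro ext) auto
    consider "j = 0" | "j = 1" | "j = k" | "j \<noteq> 0" "j \<noteq> 1" "j \<noteq> k" by auto
    then show "((\<lambda>t. swF g N (U(j:=t)) k) has_real_derivative (if j = 0 then - 2 * U 1 * U k / (U 0)^2 else if j = 1 then 2 * U k / U 0
           else if j = k then 2 * U 1 / U 0 else 0)) (at (U j))"
      unfolding fe using assms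
      by cases (auto intro!: derivative_eq_intros simp: power2_eq_square)
  qed
  then show ?thesis unfolding swA_def swB_def using assms by auto
qed

lemma sum_split: fixes f :: "nat \<Rightarrow> 'a::comm_monoid_add" shows "(\<Sum>j\<le>N+1. f j) = f 0 + f 1 + (\<Sum>i=1..N. f (i+1))"
proof -
  have "(\<Sum>j\<le>N+1. f j) = f 0 + (\<Sum>i\<le>N. f (i+1))"
    by (simp add: sum.atMost_Suc_shift del: sum.atMost_Suc)
  also have "(\<Sum>i\<le>N. f (i+1)) = (\<Sum>i=0..N. f (i+1))" by (simp add: atLeast0AtMost)
  also have "\<dots> = f 1 + (\<Sum>i=1..N. f (i+1))" by (subst sum.atLeast_Suc_atMost) auto
  finally show ?thesis by (simp only: add.assoc)
qed

lemma rowk_sum: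
  fixes k N :: nat and r :: "nat \<Rightarrow> real"
  assumes "2 \<le> k" "k \<le> N+1"
  shows "(\<Sum>j\<le>N+1. (if j = 0 then a else if j = 1 then b else if j = k then c else 0) * r j)
     = a * r 0 + b * r 1 + c * r k"
proof -
  have "(\<Sum>j\<le>N+1. (if j = 0 then a else if j = 1 then b else if j = k then c else 0) * r j)
     = (\<Sum>j\<le>N+1. (if j = 0 then a * r 0 else 0) + (if j = 1 then b * r 1 else 0) + (if j = k then c * r k else 0))"
    using assms by (intro sum.cong) auto
  also have "\<dots> = a * r 0 + b * r 1 + c * r k"
    using assms by (simp add: sum.distrib)
  finally show ?thesis .
qed

lemma eig_struct:
  assumes g: "g > 0" and h: "U 0 > 0" and d: "lam \<noteq> um U"
    and e: "is_eigvec g N U lam r"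
  shows "r 1 = lam * r 0" "\<And>k. 2 \<le> k \<Longrightarrow> k \<le> N+1 \<Longrightarrow> r k = 2 * U k / U 0 * r 0" "r 0 \<noteq> 0"
proof -
  have rows: "\<And>k. k \<le> N+1 \<Longrightarrow> (\<Sum>j\<le>N+1. swA g N U k j * r j) = lam * r k"
    and nz: "\<exists>j\<le>N+1. r j \<noteq> 0" using e unfolding is_eigvec_def by auto
  have "(\<Sum>j\<le>N+1. swA g N U 0 j * r j) = r 1"
    unfolding swA0 sum_split by simp
  then show r1: "r 1 = lam * r 0" using rows[of 0] by simp
  show rk: "r k = 2 * U k / U 0 * r 0" if k: "2 \<le> k" "k \<le> N+1" for k
  proof -
    have "(\<Sum>j\<le>N+1. swA g N U k j * r j) = - 2 * U 1 * U k / (U 0)^2 * r 0 + 2 * U k / U 0 * r 1 + U 1 / U 0 * r k"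
      unfolding swAk[of U k N g, OF h k] by (rule rowk_sum[OF k])
    then have eq: "- 2 * U 1 * U k / (U 0)^2 * r 0 + 2 * U k / U 0 * (lam * r 0) + U 1 / U 0 * r k = lam * r k"
      using rows[of k] k r1 by simp
    have t: "U 1 / U 0 * (2 * U k / U 0 * r 0) = 2 * U 1 * U k / (U 0)^2 * r 0"
      by (simp add: power2_eq_square)
    have "(lam - um U) * r k = lam * r k - U 1 / U 0 * r k" unfolding um_def by (simp add: algebra_simps)
    also have "\<dots> = 2 * U k / U 0 * (lam * r 0) - 2 * U 1 * U k / (U 0)^2 * r 0" using eq by linarith
    also have "\<dots> = lam * (2 * U k / U 0 * r 0) - U 1 / U 0 * (2 * U k / U 0 * r 0)" by (subst t) (simp add: mult_ac)
    also have "\<dots> = (lam - um U) * (2 * U k / U 0 * r 0)" unfolding um_def by (simp only: left_diff_distrib)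
    finally have "(lam - um U) * r k = (lam - um U) * (2 * U k / U 0 * r 0)" .
    then show ?thesis using d by (subst (asm) mult_left_cancel) auto
  qed
  show "r 0 \<noteq> 0"
  proof
    assume r0: "r 0 = 0"
    have "r j = 0" if "j \<le> N+1" for j
    proof -
      consider "j = 0" | "j = 1" | "2 \<le> j" by linarith
      then show ?thesis using r0 r1 rk that by cases auto
    qed
    then show False using nz by auto
  qed
qed

lemma gnl:
  assumes g: "g > 0" and h: "U 0 > 0" and s: "s = 1 \<or> s = -1"
    and e: "is_eigvec g N U (um U + s * swc g N U) r"
  shows "grad_dot N (\<lambda>V. um V + s * swc g N V) U r \<noteq> 0"
proof -
  define c where "c = sqrt (EE g N U)"
  have cpos: "c > 0" unfolding c_def using EE_pos[of g U N, OF g h] by simp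
  have swcc: "swc g N U = c" unfolding c_def swc_EE ..
  define lam where "lam = um U + s * c"
  have d: "lam \<noteq> um U" unfolding lam_def using s cpos by auto
  have e': "is_eigvec g N U lam r" using e unfolding lam_def swcc .
  note es = eig_struct[OF g h d e']
  define S where "S = (\<Sum>i=1..N. 6 * (U (i+1))^2 / ((U 0)^3 * (2 * real i + 1)))"
  have S0: "S \<ge> 0" unfolding S_def using h by (intro sum_nonneg) auto
  have gd: "grad_dot N (\<lambda>V. um V + s * swc g N V) U r
      = (\<Sum>j\<le>N+1. (du U j + s * (dE g N U j / (2 * c))) * r j)"
    unfolding grad_dot_def pd_lam[of g U, OF g h] c_def ..
  have tail: "(\<Sum>i=1..N. (du U (i+1) + s * (dE g N U (i+1) / (2 * c))) * r (i+1)) = s * r 0 * S / c"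
  proof -
    have "(\<Sum>i=1..N. (du U (i+1) + s * (dE g N U (i+1) / (2 * c))) * r (i+1))
        = (\<Sum>i=1..N. (s * r 0 / c) * (6 * (U (i+1))^2 / ((U 0)^3 * (2 * real i + 1))))"
    proof (rule sum.cong[OF refl])
      fix i assume i: "i \<in> {1..N}"
      have r: "r (i+1) = 2 * U (i+1) / U 0 * r 0" using es(2)[of "i+1"] i by auto
      have du0: "du U (i+1) = 0" using i unfolding du_def by auto
      have dEi: "dE g N U (i+1) = 6 * U (i+1) / ((U 0)^2 * (2 * real i + 1))"
        using i unfolding dE_def by auto
      have key: "\<And>D A. D > 0 \<Longrightarrow> s * (6 * A / ((U 0)^2 * D) / (2 * c)) * (2 * A / U 0 * r 0)
          = (s * r 0 / c) * (6 * A^2 / ((U 0)^3 * D))"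
        using h cpos by (simp add: field_simps power2_eq_square power3_eq_cube)
      show "(du U (i+1) + s * (dE g N U (i+1) / (2 * c))) * r (i+1)
          = (s * r 0 / c) * (6 * (U (i+1))^2 / ((U 0)^3 * (2 * real i + 1)))"
        unfolding r du0 dEi using key[of "2 * real i + 1" "U (i+1)"] by simp
    qed
    also have "\<dots> = s * r 0 * S / c" unfolding S_def sum_distrib_left[symmetric] by simp
    finally show ?thesis .
  qed
  have "grad_dot N (\<lambda>V. um V + s * swc g N V) U r
      = (- U 1 / (U 0)^2 + s * ((g - S) / (2 * c))) * r 0 + (1 / U 0) * r 1 + s * r 0 * S / c"
    unfolding gd sum_split tail by (simp add: du_def dE_def S_def)
  also have "\<dots> = s * r 0 * (c / U 0 + (g + S) / (2 * c))"
    unfolding es(1) lam_def um_def using h cpos by (simp add: field_simps power2_eq_square)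
  finally have "grad_dot N (\<lambda>V. um V + s * swc g N V) U r = s * r 0 * (c / U 0 + (g + S) / (2 * c))" .
  moreover have "c / U 0 + (g + S) / (2 * c) > 0" using cpos h g S0 by (simp add: add_pos_pos)
  moreover have "s \<noteq> 0" using s by auto
  ultimately show ?thesis using es(3) by simp
qed

theorem mainTheorem2:
  fixes g :: real and N :: nat and U :: "nat \<Rightarrow> real"
  assumes "g > 0" and "U 0 > 0"
  shows "(\<forall>r. is_eigvec g N U (lam1 g N U) r \<longrightarrow> grad_dot N (lam1 g N) U r \<noteq> 0)
       \<and> (\<forall>r. is_eigvec g N U (lam2 g N U) r \<longrightarrow> grad_dot N (lam2 g N) U r \<noteq> 0)
       \<and> (\<forall>r. is_eigvec g N U (um U) r \<longrightarrow> grad_dot N um U r = 0)"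
proof (intro conjI allI impI)
  have l1: "lam1 g N = (\<lambda>V. um V + (-1) * swc g N V)" by (rule ext) (simp add: lam1_def)
  have l2: "lam2 g N = (\<lambda>V. um V + 1 * swc g N V)" by (rule ext) (simp add: lam2_def)
  fix r
  { assume "is_eigvec g N U (lam1 g N U) r"
    then show "grad_dot N (lam1 g N) U r \<noteq> 0" unfolding l1 using gnl[of g U _ N r, OF assms, of "-1"] by simp }
  { assume "is_eigvec g N U (lam2 g N U) r"
    then show "grad_dot N (lam2 g N) U r \<noteq> 0" unfolding l2 using gnl[of g U _ N r, OF assms, of 1] by simp }
  { assume e: "is_eigvec g N U (um U) r"
    have rows: "(\<Sum>j\<le>N+1. swA g N U 0 j * r j) = um U * r 0"
      using e unfolding is_eigvec_def by auto
    have "(\<Sum>j\<le>N+1. swA g N U 0 j * r j) = r 1"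
      unfolding swA0 sum_split by simp
    then have r1: "r 1 = um U * r 0" using rows by simp
    have "grad_dot N um U r = (\<Sum>j\<le>N+1. du U j * r j)"
      unfolding grad_dot_def pd_um[of U, OF assms(2)] ..
    also have "\<dots> = - U 1 / (U 0)^2 * r 0 + 1 / U 0 * r 1"
      unfolding sum_split by (simp add: du_def)
    also have "\<dots> = 0" unfolding r1 um_def using assms(2) by (simp add: field_simps power2_eq_square)
    finally show "grad_dot N um U r = 0" . }
qed

end
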